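(* Let $\rho_{Q^n}$ be an arbitrary normalized state on $Q^{\otimes n}$. Suppose the $i$th subsystem is measured with a two-outcome POVM $\{P(i),I-P(i)\}$, and let $\boldsymbol N_P$ be the number of first outcomes; similarly, with POVMs $\{P'(i),I-P'(i)\}$, let $\boldsymbol N_{P'}$ be the number of first outcomes. Suppose for every $i$ there is $0\le\tilde P(i)\le I$ with $P(i)\le\tilde P(i)$, $P'(i)\le\tilde P(i)$ and $\|\tilde P(i)-P(i)\|_\infty\le\delta$. Then $$\Pr\Big(\frac{\boldsymbol N_{P'}}{n}\ge e+\delta+c\Big)\le\Pr\Big(\frac{\boldsymbol N_P}{n}\ge e\Big)+\sum_{i=n(\delta+c)}^{n}\binom ni\delta^i(1-\delta)^{n-i}$$ (sum over integers $i$ with $n(\delta+c)\le i\le n$). *)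

theory Defs
  imports Complex_Main
begin

text \<open>A system with orthonormal basis
indexed by a finite type 'a has operators represented by their matrices
'a \<Rightarrow> 'a \<Rightarrow> complex.  The n-fold tensor power Q^{\<otimes>n} of a system Q with
basis index 'd is the system with basis index 'n \<Rightarrow> 'd, where 'n is a finite
type with CARD('n) = n (the subsystems).\<close>

type_synonym 'a qop = "'a \<Rightarrow> 'a \<Rightarrow> complex"

definition app :: "('a::finite) qop \<Rightarrow> ('a \<Rightarrow> complex) \<Rightarrow> ('a \<Rightarrow> complex)" where
  "app A v = (\<lambda>i. \<Sum>j\<in>UNIV. A i j * v j)"

definition cinner :: "('a::finite \<Rightarrow> complex) \<Rightarrow> ('a \<Rightarrow> complex) \<Rightarrow> complex" where
  "cinner v w = (\<Sum>i\<in>UNIV. cnj (v i) * w i)"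

definition vnorm :: "('a::finite \<Rightarrow> complex) \<Rightarrow> real" where
  "vnorm v = sqrt (\<Sum>i\<in>UNIV. (cmod (v i))^2)"

definition psd :: "('a::finite) qop \<Rightarrow> bool" where
  "psd A \<longleftrightarrow> (\<forall>v. Im (cinner v (app A v)) = 0 \<and> Re (cinner v (app A v)) \<ge> 0)"

definition op_minus :: "'a qop \<Rightarrow> 'a qop \<Rightarrow> 'a qop" where
  "op_minus A B = (\<lambda>i j. A i j - B i j)"

definition idop :: "'a qop" where
  "idop = (\<lambda>i j. if i = j then 1 else 0)"

definition zeroop :: "'a qop" where
  "zeroop = (\<lambda>i j. 0)"

definition op_le :: "('a::finite) qop \<Rightarrow> 'a qop \<Rightarrow> bool" where
  "op_le A B \<longleftrightarrow> psd (op_minus B A)"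

definition trace :: "('a::finite) qop \<Rightarrow> complex" where
  "trace A = (\<Sum>i\<in>UNIV. A i i)"

definition op_mult :: "('a::finite) qop \<Rightarrow> 'a qop \<Rightarrow> 'a qop" where
  "op_mult A B = (\<lambda>i k. \<Sum>j\<in>UNIV. A i j * B j k)"

definition op_norm :: "('a::finite) qop \<Rightarrow> real" where
  "op_norm A = Sup {vnorm (app A v) | v. vnorm v = 1}"

definition is_state :: "('a::finite) qop \<Rightarrow> bool" where
  "is_state \<rho> \<longleftrightarrow> psd \<rho> \<and> trace \<rho> = 1"

definition tensor :: "('n::finite \<Rightarrow> ('d::finite) qop) \<Rightarrow> ('n \<Rightarrow> 'd) qop" where
  "tensor A = (\<lambda>f g. \<Prod>i\<in>UNIV. A i (f i) (g i))"

text \<open>Subsystem i measured with the two-outcome POVM {P i, I - P i}; the outcome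
string x has x i = True iff the first outcome (P i) occurred at site i.
Born rule probability of the outcome string x.\<close>
definition outcome_prob ::
  "(('n::finite \<Rightarrow> 'd::finite) qop) \<Rightarrow> ('n \<Rightarrow> 'd qop) \<Rightarrow> ('n \<Rightarrow> bool) \<Rightarrow> real" where
  "outcome_prob \<rho> P x =
     Re (trace (op_mult \<rho> (tensor (\<lambda>i. if x i then P i else op_minus idop (P i)))))"

definition prob_frac_ge ::
  "(('n::finite \<Rightarrow> 'd::finite) qop) \<Rightarrow> ('n \<Rightarrow> 'd qop) \<Rightarrow> real \<Rightarrow> real" where
  "prob_frac_ge \<rho> P t =
     (\<Sum>x\<in>{x::'n \<Rightarrow> bool. real (card {i. x i}) / real (card (UNIV :: 'n set)) \<ge> t}. outcome_prob \<rho> P x)"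

end

theory Submission
  imports Defs "HOL-Analysis.L2_Norm" "HOL-Library.FuncSet"
begin


definition mu :: "(('n::finite \<Rightarrow> 'd::finite) qop) \<Rightarrow> ('n \<Rightarrow> 'd qop) \<Rightarrow> real" where
  "mu \<rho> A = Re (trace (op_mult \<rho> (tensor A)))"

lemma PiE_UNIV_eq: "PiE UNIV B = {f. \<forall>x. f x \<in> B x}"
  by (auto simp: PiE_UNIV_domain Pi_def)

lemma finite_funs: "(\<And>i. finite (B i)) \<Longrightarrow> finite {f::'n::finite \<Rightarrow> 'b. \<forall>x. f x \<in> B x}"
  by (metis PiE_UNIV_eq finite_PiE finite)

lemma mu_sum:
  fixes F :: "'n::finite \<Rightarrow> 'a \<Rightarrow> 'd::finite qop"
  assumes "\<And>i. finite (Os i)"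
  shows "mu \<rho> (\<lambda>i a b. \<Sum>k\<in>Os i. F i k a b) = (\<Sum>y\<in>{y. \<forall>i. y i \<in> Os i}. mu \<rho> (\<lambda>i. F i (y i)))"
proof -
  have t: "tensor (\<lambda>i a b. \<Sum>k\<in>Os i. F i k a b) = (\<lambda>f g. \<Sum>y\<in>{y. \<forall>i. y i \<in> Os i}. tensor (\<lambda>i. F i (y i)) f g)"
    unfolding tensor_def PiE_UNIV_eq[symmetric]
    by (intro ext prod_sum_PiE) (auto simp: assms)
  show ?thesis unfolding mu_def t trace_def op_mult_def
    by (simp add: sum_distrib_left sum.swap[of _ "{y. \<forall>i. y i \<in> Os i}"])
qed

lemma cinner_app: "cinner v (app M v) = (\<Sum>a\<in>UNIV. \<Sum>b\<in>UNIV. cnj (v a) * M a b * v b)"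
  by (simp add: cinner_def app_def sum_distrib_left mult.assoc)

lemma mu_rank1:
  fixes u :: "'n::finite \<Rightarrow> 'd::finite \<Rightarrow> complex"
  assumes "psd \<rho>"
  shows "mu \<rho> (\<lambda>i a b. u i a * cnj (u i b)) \<ge> 0"
proof -
  define U where "U f = (\<Prod>i\<in>UNIV. u i (f i))" for f
  have "trace (op_mult \<rho> (tensor (\<lambda>i a b. u i a * cnj (u i b)))) = cinner U (app \<rho> U)"
    unfolding trace_def op_mult_def tensor_def cinner_def app_def U_def
    by (simp add: prod.distrib sum_distrib_left mult_ac)
  then show ?thesis using assms unfolding psd_def mu_def by simp
qed



lemma mult_if0: "(x::complex) * (if c then s else 0) = (if c then x * s else 0)" by simp
lemma if0_mult: "(if c then s else 0) * (x::complex) = (if c then s * x else 0)" by simp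
lemma cnj_if0: "cnj (if c then s else 0) = (if c then cnj s else 0)" by simp

lemma quad2:
  fixes A :: "'d::finite qop"
  assumes "a \<noteq> b"
  shows "cinner (\<lambda>x. (if x = a then s else 0) + (if x = b then t else 0)) (app A (\<lambda>x. (if x = a then s else 0) + (if x = b then t else 0)))
     = cnj s * s * A a a + cnj s * t * A a b + cnj t * s * A b a + cnj t * t * A b b"
proof -
  let ?v = "\<lambda>x. (if x = a then s else 0) + (if x = b then t else 0)"
  have ap: "app A ?v = (\<lambda>x. A x a * s + A x b * t)"
  proof -
    have h: "(\<lambda>y. A x y * ?v y) = (\<lambda>y. (if y = a then A x a * s else 0) + (if y = b then A x b * t else 0))" for x
      using assms by (auto simp: fun_eq_iff)
    have "(\<Sum>y\<in>UNIV. A x y * ?v y) = A x a * s + A x b * t" for x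
      unfolding h by (simp add: sum.distrib)
    then show ?thesis unfolding app_def by simp
  qed
  have ci: "cinner ?v w = cnj s * w a + cnj t * w b" for w
  proof -
    have h: "(\<lambda>x. cnj (?v x) * w x) = (\<lambda>x. (if x = a then cnj s * w a else 0) + (if x = b then cnj t * w b else 0))"
      using assms by (auto simp: fun_eq_iff)
    show ?thesis unfolding cinner_def h by (simp add: sum.distrib)
  qed
  have "cinner ?v (app A ?v) = cnj s * (A a a * s + A a b * t) + cnj t * (A b a * s + A b b * t)" unfolding ap ci by simp
  then show ?thesis by (simp add: distrib_left mult_ac)
qed

lemma quad1:
  fixes A :: "'d::finite qop"
  shows "cinner (\<lambda>x. if x = a then s else 0) (app A (\<lambda>x. if x = a then s else 0)) = cnj s * s * A a a"
proof -
  let ?v = "\<lambda>x. if x = a then s else 0"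
  have h: "(\<lambda>y. A x y * ?v y) = (\<lambda>y. if y = a then A x a * s else 0)" for x
    by (auto simp: fun_eq_iff)
  have ap: "app A ?v = (\<lambda>x. A x a * s)" unfolding app_def h by simp
  have h2: "(\<lambda>x. cnj (?v x) * w x) = (\<lambda>x. if x = a then cnj s * w a else 0)" for w
    by (auto simp: fun_eq_iff)
  show ?thesis unfolding ap cinner_def h2 by (simp add: mult_ac)
qed

lemma psd_diag_real: "psd A \<Longrightarrow> Im (A a a) = 0 \<and> Re (A a a) \<ge> 0"
  using quad1[of a 1 A] unfolding psd_def by (metis mult_1 complex_cnj_one)

lemma psd_herm:
  assumes "psd A" shows "A b a = cnj (A a b)"
proof (cases "a = b")
  case True then show ?thesis using psd_diag_real[OF assms, of a] by (simp add: complex_eq_iff)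
next
  case False
  have q: "\<And>v. Im (cinner v (app A v)) = 0" using assms unfolding psd_def by blast
  have h1: "Im (A a a) + Im (A a b) + Im (A b a) + Im (A b b) = 0" 
    using quad2[OF False, of 1 1 A] q[of "\<lambda>x. (if x = a then 1 else 0) + (if x = b then 1 else 0)"] by simp
  have h2: "Im (A a a) + Re (A a b) - Re (A b a) + Im (A b b) = 0" 
    using quad2[OF False, of 1 \<i> A] q[of "\<lambda>x. (if x = a then 1 else 0) + (if x = b then \<i> else 0)"] by simp
  have "Im (A a a) = 0" "Im (A b b) = 0" using psd_diag_real[OF assms] by auto
  with h1 h2 have "Re (A b a) = Re (A a b)" "Im (A b a) = - Im (A a b)" by linarith+
  then show ?thesis by (simp add: complex_eq_iff)
qed



lemma psd_zero_row:
  assumes "psd A" "A x x = 0"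
  shows "A x b = 0"
proof (rule ccontr)
  assume nz: "A x b \<noteq> 0"
  then have xb: "x \<noteq> b" using assms by auto
  define r :: real where "r = (Re (A b b) + 1) / (2 * (cmod (A x b))^2)"
  define s where "s = - of_real r * A x b"
  have r: "r * (cmod (A x b))^2 = (Re (A b b) + 1) / 2" using nz unfolding r_def by simp
  have q: "Re (cinner v (app A v)) \<ge> 0" for v using assms unfolding psd_def by blast
  have hA: "A b x = cnj (A x b)" by (rule psd_herm[OF assms(1)])
  have m: "A x b * cnj (A x b) = of_real ((cmod (A x b))^2)" by (rule complex_norm_square[symmetric])
  have "cnj s * A x b = - of_real r * (A x b * cnj (A x b))" unfolding s_def by (simp add: mult_ac)
  then have e1: "cnj s * A x b = - of_real (r * (cmod (A x b))^2)" unfolding m by simp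
  have "s * A b x = - of_real r * (A x b * cnj (A x b))" unfolding s_def hA by (simp add: mult_ac)
  then have e2: "s * A b x = - of_real (r * (cmod (A x b))^2)" unfolding m by simp
  have "Re (cnj s * s * A x x + cnj s * 1 * A x b + cnj 1 * s * A b x + cnj 1 * 1 * A b b) \<ge> 0"
    using q[of "\<lambda>y. (if y = x then s else 0) + (if y = b then 1 else 0)"] quad2[OF xb, of s 1 A] by simp
  then have "Re (cnj s * A x b) + Re (s * A b x) + Re (A b b) \<ge> 0" using assms(2) by simp
  then show False unfolding e1 e2 r by simp
qed


lemma psd_schur:
  fixes A :: "'d::finite qop"
  assumes "psd A" "A x x \<noteq> 0"
  shows "psd (\<lambda>a b. A a b - A a x * A x b / A x x)"
  unfolding psd_def
proof
  fix v :: "'d \<Rightarrow> complex"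
  define A' where "A' = (\<lambda>a b. A a b - A a x * A x b / A x x)"
  define v' where "v' = v(x := - (\<Sum>b\<in>UNIV - {x}. A x b * v b) / A x x)"
  have "(\<Sum>b\<in>UNIV. A x b * v' b) = A x x * v' x + (\<Sum>b\<in>UNIV - {x}. A x b * v' b)"
    by (simp add: sum.remove)
  also have "(\<Sum>b\<in>UNIV - {x}. A x b * v' b) = (\<Sum>b\<in>UNIV - {x}. A x b * v b)"
    unfolding v'_def by (intro sum.cong) auto
  finally have z: "(\<Sum>b\<in>UNIV. A x b * v' b) = 0" using assms(2) unfolding v'_def by simp
  have A'x1: "A' x b = 0" for b using assms(2) unfolding A'_def by simp
  have A'x2: "A' a x = 0" for a using assms(2) unfolding A'_def by simp
  have tt: "cnj (v a) * A' a b * v b = cnj (v' a) * A' a b * v' b" for a b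
    by (cases "a = x"; cases "b = x") (auto simp: v'_def A'x1 A'x2)
  have e1: "cinner v (app A' v) = cinner v' (app A' v')" unfolding cinner_app
    by (rule sum.cong[OF refl], rule sum.cong[OF refl], rule tt)
  have "cinner v' (app A' v') = (\<Sum>a\<in>UNIV. \<Sum>b\<in>UNIV. cnj (v' a) * A a b * v' b)
      - (\<Sum>a\<in>UNIV. \<Sum>b\<in>UNIV. (cnj (v' a) * A a x / A x x) * (A x b * v' b))"
    unfolding cinner_app A'_def by (simp add: right_diff_distrib left_diff_distrib sum_subtractf mult_ac)
  also have "(\<Sum>a\<in>UNIV. \<Sum>b\<in>UNIV. (cnj (v' a) * A a x / A x x) * (A x b * v' b)) = 0"
  proof -
    have "(\<Sum>b\<in>UNIV. (cnj (v' a) * A a x / A x x) * (A x b * v' b)) = (cnj (v' a) * A a x / A x x) * (\<Sum>b\<in>UNIV. A x b * v' b)" for a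
      by (rule sum_distrib_left[symmetric])
    then show ?thesis using z by simp
  qed
  finally have "cinner v' (app A' v') = cinner v' (app A v')" unfolding cinner_app by simp
  with e1 have eq: "cinner v (app A' v) = cinner v' (app A v')" by simp
  have eq2: "cinner v (app (\<lambda>a b. A a b - A a x * A x b / A x x) v) = cinner v' (app A v')"
    using eq unfolding A'_def .
  have "Im (cinner v' (app A v')) = 0 \<and> 0 \<le> Re (cinner v' (app A v'))"
    using assms(1) unfolding psd_def by blast
  then show "Im (cinner v (app (\<lambda>a b. A a b - A a x * A x b / A x x) v)) = 0 \<and>
          0 \<le> Re (cinner v (app (\<lambda>a b. A a b - A a x * A x b / A x x) v))"
    unfolding eq2 .
qed

lemma psd_dec_aux:
  assumes "finite S"
  shows "\<forall>A::'d::finite qop. psd A \<and> (\<forall>a b. a \<notin> S \<or> b \<notin> S \<longrightarrow> A a b = 0)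
           \<longrightarrow> (\<exists>(k::nat) w. \<forall>a b. A a b = (\<Sum>j<k. w j a * cnj (w j b)))"
  using assms
proof (induction S rule: finite_induct)
  case empty
  have "\<exists>(k::nat) w. \<forall>a b. (A::'d qop) a b = (\<Sum>j<k. w j a * cnj (w j b))" if "\<forall>a b. A a b = 0" for A
  proof -
    fix w :: "nat \<Rightarrow> 'd \<Rightarrow> complex"
    have "\<forall>a b. A a b = (\<Sum>j<(0::nat). w j a * cnj (w j b))"
      using that by simp
    then show ?thesis by blast
  qed
  then show ?case by auto
next
  case (insert x S)
  show ?case
  proof (intro allI impI)
    fix A :: "'d qop"
    assume H: "psd A \<and> (\<forall>a b. a \<notin> insert x S \<or> b \<notin> insert x S \<longrightarrow> A a b = 0)"
    then have psdA: "psd A" by blast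
    show "\<exists>(k::nat) w. \<forall>a b. A a b = (\<Sum>j<k. w j a * cnj (w j b))"
    proof (cases "A x x = 0")
      case True
      have r: "A x b = 0" for b using psd_zero_row[OF psdA True] .
      have c: "A b x = 0" for b using psd_herm[OF psdA, of b x] r[of b] by simp
      have z: "A a b = 0" if "a \<notin> S \<or> b \<notin> S" for a b
      proof (cases "a = x \<or> b = x")
        case True then show ?thesis using r c by auto
      next
        case False then show ?thesis using H that by auto
      qed
      have "\<forall>a b. a \<notin> S \<or> b \<notin> S \<longrightarrow> A a b = 0"
        using z by blast
      then show ?thesis using insert.IH psdA by blast
    next
      case False
      define \<alpha> where "\<alpha> = Re (A x x)"
      have axx: "A x x = of_real \<alpha>" using psd_diag_real[OF psdA, of x] unfolding \<alpha>_def
        by (simp add: complex_eq_iff)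
      have "\<alpha> \<noteq> 0" using False axx by auto
      then have apos: "\<alpha> > 0" using psd_diag_real[OF psdA, of x] unfolding \<alpha>_def by linarith
      define A' where "A' = (\<lambda>a b. A a b - A a x * A x b / A x x)"
      have psd': "psd A'" unfolding A'_def by (rule psd_schur[OF psdA False])
      have supp: "\<forall>a b. a \<notin> S \<or> b \<notin> S \<longrightarrow> A' a b = 0"
      proof (intro allI impI)
        fix a b assume ab: "a \<notin> S \<or> b \<notin> S"
        show "A' a b = 0"
        proof (cases "a = x \<or> b = x")
          case True then show ?thesis using False unfolding A'_def by auto
        next
          case F2: False
          then show ?thesis using H ab unfolding A'_def by auto
        qed
      qed
      obtain k w where kw: "\<forall>a b. A' a b = (\<Sum>j<(k::nat). w j a * cnj (w j b))"
        using insert.IH psd' supp by blast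
      define u where "u a = A a x / of_real (sqrt \<alpha>)" for a
      have hx: "A x b = cnj (A b x)" for b using psd_herm[OF psdA, of x b] by simp
      have uu: "u a * cnj (u b) = A a x * A x b / A x x" for a b
      proof -
        have "u a * cnj (u b) = A a x * cnj (A b x) / (of_real (sqrt \<alpha>) * of_real (sqrt \<alpha>))"
          unfolding u_def complex_cnj_divide complex_cnj_complex_of_real by (rule times_divide_times_eq)
        also have "of_real (sqrt \<alpha>) * of_real (sqrt \<alpha>) = (of_real \<alpha> :: complex)"
        proof -
          have "sqrt \<alpha> * sqrt \<alpha> = \<alpha>" using apos by simp
          then show ?thesis by (simp only: of_real_mult[symmetric])
        qed
        also have "cnj (A b x) = A x b" by (rule hx[of b, symmetric])
        finally show ?thesis by (simp only: axx)
      qed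
      show ?thesis
      proof (intro exI allI)
        fix a b
        have s1: "(\<Sum>j<Suc k. (w(k := u)) j a * cnj ((w(k := u)) j b))
            = (\<Sum>j<k. (w(k := u)) j a * cnj ((w(k := u)) j b)) + u a * cnj (u b)"
          by (simp only: sum.lessThan_Suc fun_upd_same)
        have s2: "(\<Sum>j<k. (w(k := u)) j a * cnj ((w(k := u)) j b)) = (\<Sum>j<k. w j a * cnj (w j b))"
          by (rule sum.cong) auto
        have s3: "(\<Sum>j<k. w j a * cnj (w j b)) = A a b - A a x * A x b / A x x"
          using kw unfolding A'_def by simp
        show "A a b = (\<Sum>j<Suc k. (w(k := u)) j a * cnj ((w(k := u)) j b))"
          unfolding s1 s2 s3 uu by simp
      qed
    qed
  qed
qed

lemma psd_dec:
  fixes A :: "'d::finite qop"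
  assumes "psd A"
  shows "\<exists>(k::nat) w. \<forall>a b. A a b = (\<Sum>j<k. w j a * cnj (w j b))"
  using psd_dec_aux[of "UNIV :: 'd set"] assms by auto



lemma mu_pos:
  fixes A :: "'n::finite \<Rightarrow> 'd::finite qop"
  assumes "psd \<rho>" "\<And>i. psd (A i)"
  shows "mu \<rho> A \<ge> 0"
proof -
  have ex: "\<forall>i. \<exists>kw::nat \<times> (nat \<Rightarrow> 'd \<Rightarrow> complex). \<forall>a b. A i a b = (\<Sum>j<fst kw. snd kw j a * cnj (snd kw j b))"
  proof
    fix i
    obtain k w where kw: "\<forall>a b. A i a b = (\<Sum>j<(k::nat). w j a * cnj (w j b))" using psd_dec[OF assms(2)] by blast
    show "\<exists>kw::nat \<times> (nat \<Rightarrow> 'd \<Rightarrow> complex). \<forall>a b. A i a b = (\<Sum>j<fst kw. snd kw j a * cnj (snd kw j b))"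
      by (rule exI[of _ "(k, w)"]) (simp add: kw)
  qed
  obtain f :: "'n \<Rightarrow> nat \<times> (nat \<Rightarrow> 'd \<Rightarrow> complex)" where f: "\<forall>i. \<forall>a b. A i a b = (\<Sum>j<fst (f i). snd (f i) j a * cnj (snd (f i) j b))"
    using choice[OF ex] by blast
  define K where "K i = fst (f i)" for i
  define W where "W i = snd (f i)" for i
  have KW: "\<And>i a b. A i a b = (\<Sum>j<K i. W i j a * cnj (W i j b))" using f unfolding K_def W_def by blast
  have "A = (\<lambda>i a b. \<Sum>j\<in>{..<K i}. (\<lambda>j a b. W i j a * cnj (W i j b)) j a b)"
    using KW by (simp add: fun_eq_iff)
  then have "mu \<rho> A = (\<Sum>y\<in>{y. \<forall>i. y i \<in> {..<K i}}. mu \<rho> (\<lambda>i a b. W i (y i) a * cnj (W i (y i) b)))"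
    using mu_sum[of "\<lambda>i. {..<K i}" \<rho> "\<lambda>i j a b. W i j a * cnj (W i j b)"] by simp
  also have "\<dots> \<ge> 0" by (intro sum_nonneg mu_rank1[OF assms(1)])
  finally show ?thesis .
qed

lemma psd_add: "psd A \<Longrightarrow> psd B \<Longrightarrow> psd (\<lambda>a b. A a b + B a b)"
  unfolding psd_def cinner_app by (simp add: distrib_left distrib_right sum.distrib)



lemma vnorm_L2: "vnorm v = L2_set (\<lambda>i. cmod (v i)) UNIV"
  unfolding vnorm_def L2_set_def by simp

lemma cinner_cs: "cmod (cinner v w) \<le> vnorm v * vnorm w"
proof -
  have "cmod (cinner v w) \<le> (\<Sum>i\<in>UNIV. cmod (cnj (v i) * w i))"
    unfolding cinner_def by (rule norm_sum)
  also have "\<dots> = (\<Sum>i\<in>UNIV. \<bar>cmod (v i)\<bar> * \<bar>cmod (w i)\<bar>)" by (simp add: norm_mult)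
  also have "\<dots> \<le> vnorm v * vnorm w" unfolding vnorm_L2 by (rule L2_set_mult_ineq)
  finally show ?thesis .
qed

lemma vnorm_scale: "vnorm (\<lambda>i. of_real r * v i) = \<bar>r\<bar> * vnorm v"
  unfolding vnorm_L2 by (simp add: norm_mult L2_set_right_distrib)

lemma app_scale: "app Q (\<lambda>i. c * v i) = (\<lambda>i. c * app Q v i)"
  unfolding app_def by (simp add: sum_distrib_left mult_ac)

lemma vnorm_zero: "vnorm v = 0 \<Longrightarrow> v = (\<lambda>i. 0)"
  unfolding vnorm_L2 by (simp add: L2_set_eq_0_iff fun_eq_iff)

lemma op_bdd: "bdd_above {vnorm (app Q v) | v. vnorm v = 1}"
proof (rule bdd_aboveI)
  fix x assume "x \<in> {vnorm (app Q v) | v. vnorm v = 1}"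
  then obtain v where x: "x = vnorm (app Q v)" and v: "vnorm v = 1" by blast
  have le1: "cmod (v j) \<le> 1" for j
    using member_le_L2_set[of UNIV j "\<lambda>i. cmod (v i)"] v unfolding vnorm_L2 by simp
  have "x \<le> (\<Sum>i\<in>UNIV. \<bar>cmod (app Q v i)\<bar>)" unfolding x vnorm_L2 by (rule L2_set_le_sum_abs)
  also have "\<dots> \<le> (\<Sum>i\<in>UNIV. \<Sum>j\<in>UNIV. cmod (Q i j))"
  proof (rule sum_mono)
    fix i
    have "\<bar>cmod (app Q v i)\<bar> \<le> (\<Sum>j\<in>UNIV. cmod (Q i j * v j))" unfolding app_def by (simp add: norm_sum)
    also have "\<dots> \<le> (\<Sum>j\<in>UNIV. cmod (Q i j))"
      by (rule sum_mono) (simp add: norm_mult mult_left_le le1)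
    finally show "\<bar>cmod (app Q v i)\<bar> \<le> (\<Sum>j\<in>UNIV. cmod (Q i j))" .
  qed
  finally show "x \<le> (\<Sum>i\<in>UNIV. \<Sum>j\<in>UNIV. cmod (Q i j))" .
qed

lemma app_norm_le: "vnorm (app Q v) \<le> op_norm Q * vnorm v"
proof (cases "vnorm v = 0")
  case True
  then have "v = (\<lambda>i. 0)" by (rule vnorm_zero)
  then have "app Q v = (\<lambda>i. 0)" unfolding app_def by simp
  then show ?thesis using True by (simp add: vnorm_def)
next
  case False
  define nv where "nv = vnorm v"
  have "nv \<ge> 0" unfolding nv_def vnorm_L2 by simp
  then have nvpos: "nv > 0" using False unfolding nv_def by simp
  define u where "u = (\<lambda>i. of_real (1 / nv) * v i)"
  have "vnorm u = 1" unfolding u_def vnorm_scale nv_def using nvpos nv_def by simp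
  then have "vnorm (app Q u) \<le> op_norm Q"
    unfolding op_norm_def by (intro cSup_upper op_bdd) blast
  moreover have "vnorm (app Q u) = vnorm (app Q v) / nv"
    unfolding u_def app_scale vnorm_scale using nvpos by simp
  ultimately show ?thesis using nvpos unfolding nv_def by (simp add: divide_le_eq mult.commute)
qed

lemma mult_cnj_eq: "z * cnj z = (of_real (cmod z))^2"
  using complex_norm_square[of z] by simp

lemma cinner_idop: "cinner v (app (\<lambda>a b. of_real c * idop a b) v) = of_real (c * (\<Sum>a\<in>UNIV. (cmod (v a))^2))"
proof -
  have h: "(\<lambda>b. cnj (v a) * (of_real c * idop a b) * v b) = (\<lambda>b. if b = a then of_real c * of_real ((cmod (v a))^2) else 0)" for a
    by (auto simp: idop_def fun_eq_iff mult_cnj_eq mult_ac)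
  have "\<And>a. (\<Sum>b\<in>UNIV. cnj (v a) * (of_real c * idop a b) * v b) = of_real c * of_real ((cmod (v a))^2)"
    unfolding h by simp
  then show ?thesis unfolding cinner_app by (simp add: sum_distrib_left)
qed

lemma psd_idop_scale: "c \<ge> 0 \<Longrightarrow> psd (\<lambda>a b. of_real c * idop a b)"
  unfolding psd_def cinner_idop by (simp add: sum_nonneg)

lemma cinner_diff: "cinner v (app (\<lambda>a b. A a b - B a b) v) = cinner v (app A v) - cinner v (app B v)"
  unfolding cinner_app by (simp add: right_diff_distrib left_diff_distrib sum_subtractf)

lemma psd_from_norm:
  assumes "psd Q" "op_norm Q \<le> \<delta>"
  shows "psd (\<lambda>a b. of_real \<delta> * idop a b - Q a b)"
  unfolding psd_def
proof
  fix v :: "'a \<Rightarrow> complex"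
  have "0 \<le> (\<Sum>a\<in>UNIV. (cmod (v a))^2)" by (intro sum_nonneg) simp
  then have sq: "(\<Sum>a\<in>UNIV. (cmod (v a))^2) = (vnorm v)^2" unfolding vnorm_def by simp
  have "Re (cinner v (app Q v)) \<le> cmod (cinner v (app Q v))" by (rule complex_Re_le_cmod)
  also have "\<dots> \<le> vnorm v * vnorm (app Q v)" by (rule cinner_cs)
  also have "\<dots> \<le> vnorm v * (op_norm Q * vnorm v)"
    by (rule mult_left_mono[OF app_norm_le]) (simp add: vnorm_L2)
  also have "\<dots> \<le> vnorm v * (\<delta> * vnorm v)"
    by (intro mult_left_mono mult_right_mono assms(2)) (simp_all add: vnorm_L2)
  finally have r: "Re (cinner v (app Q v)) \<le> \<delta> * (vnorm v)^2" by (simp add: power2_eq_square mult_ac)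
  have i: "Im (cinner v (app Q v)) = 0" using assms(1) unfolding psd_def by blast
  show "Im (cinner v (app (\<lambda>a b. of_real \<delta> * idop a b - Q a b) v)) = 0 \<and>
        0 \<le> Re (cinner v (app (\<lambda>a b. of_real \<delta> * idop a b - Q a b) v))"
    unfolding cinner_diff cinner_idop sq using r i by simp
qed



lemma cg:
  fixes F :: "'n::finite \<Rightarrow> 'a \<Rightarrow> 'd::finite qop" and G :: "'n \<Rightarrow> 'b \<Rightarrow> 'd qop"
    and w :: "('n \<Rightarrow> 'b) \<Rightarrow> real" and \<pi> :: "'a \<Rightarrow> 'b"
  assumes fin1: "finite O1" and fin2: "finite O2" and im: "\<pi> ` O1 \<subseteq> O2"
    and G: "\<And>i o2 a b. o2 \<in> O2 \<Longrightarrow> G i o2 a b = (\<Sum>k\<in>{k\<in>O1. \<pi> k = o2}. F i k a b)"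
  shows "(\<Sum>y\<in>{y. \<forall>i. y i \<in> O1}. w (\<pi> \<circ> y) * mu \<rho> (\<lambda>i. F i (y i)))
       = (\<Sum>z\<in>{z. \<forall>i. z i \<in> O2}. w z * mu \<rho> (\<lambda>i. G i (z i)))"
proof -
  let ?Y = "{y::'n \<Rightarrow> 'a. \<forall>i. y i \<in> O1}" and ?Z = "{z::'n \<Rightarrow> 'b. \<forall>i. z i \<in> O2}"
  have inner: "mu \<rho> (\<lambda>i. G i (z i)) = (\<Sum>y\<in>{y \<in> ?Y. \<pi> \<circ> y = z}. mu \<rho> (\<lambda>i. F i (y i)))"
    if z: "z \<in> ?Z" for z
  proof -
    have "(\<lambda>i. G i (z i)) = (\<lambda>i a b. \<Sum>k\<in>{k\<in>O1. \<pi> k = z i}. F i k a b)"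
      using G z by (auto simp: fun_eq_iff)
    then have "mu \<rho> (\<lambda>i. G i (z i)) = (\<Sum>y\<in>{y. \<forall>i. y i \<in> {k\<in>O1. \<pi> k = z i}}. mu \<rho> (\<lambda>i. F i (y i)))"
      using mu_sum[of "\<lambda>i. {k\<in>O1. \<pi> k = z i}" \<rho> F] fin1 by simp
    also have "{y. \<forall>i. y i \<in> {k\<in>O1. \<pi> k = z i}} = {y \<in> ?Y. \<pi> \<circ> y = z}"
      by (auto simp: fun_eq_iff)
    finally show ?thesis .
  qed
  have "(\<Sum>z\<in>?Z. w z * mu \<rho> (\<lambda>i. G i (z i)))
      = (\<Sum>z\<in>?Z. \<Sum>y\<in>{y \<in> ?Y. \<pi> \<circ> y = z}. w (\<pi> \<circ> y) * mu \<rho> (\<lambda>i. F i (y i)))"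
  proof (rule sum.cong[OF refl])
    fix z assume z: "z \<in> ?Z"
    have "w z * mu \<rho> (\<lambda>i. G i (z i)) = (\<Sum>y\<in>{y \<in> ?Y. \<pi> \<circ> y = z}. w z * mu \<rho> (\<lambda>i. F i (y i)))"
      unfolding inner[OF z] by (rule sum_distrib_left)
    also have "\<dots> = (\<Sum>y\<in>{y \<in> ?Y. \<pi> \<circ> y = z}. w (\<pi> \<circ> y) * mu \<rho> (\<lambda>i. F i (y i)))"
      by (rule sum.cong) auto
    finally show "w z * mu \<rho> (\<lambda>i. G i (z i)) = (\<Sum>y\<in>{y \<in> ?Y. \<pi> \<circ> y = z}. w (\<pi> \<circ> y) * mu \<rho> (\<lambda>i. F i (y i)))" .
  qed
  also have "\<dots> = (\<Sum>y\<in>?Y. w (\<pi> \<circ> y) * mu \<rho> (\<lambda>i. F i (y i)))"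
  proof (rule sum.group)
    show "finite ?Y" using finite_funs[of "\<lambda>_. O1"] fin1 by simp
    show "finite ?Z" using finite_funs[of "\<lambda>_. O2"] fin2 by simp
    show "(\<lambda>y. \<pi> \<circ> y) ` ?Y \<subseteq> ?Z" using im by auto
  qed
  finally show ?thesis by simp
qed

lemma prod_idop:
  fixes f g :: "'n::finite \<Rightarrow> 'd"
  shows "(\<Prod>i\<in>UNIV. idop (f i) (g i)) = (idop f g :: complex)"
proof (cases "f = g")
  case True then show ?thesis by (simp add: idop_def)
next
  case False
  then obtain i where "f i \<noteq> g i" by (auto simp: fun_eq_iff)
  then have "idop (f i) (g i) = (0::complex)" by (simp add: idop_def)
  then have "(\<Prod>i\<in>UNIV. idop (f i) (g i)) = (0::complex)" by (intro prod_zero) auto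
  then show ?thesis using False by (simp add: idop_def)
qed

lemma mu_idop_scale:
  fixes s :: "'n::finite \<Rightarrow> real" and \<rho> :: "('n \<Rightarrow> 'd::finite) qop"
  assumes "trace \<rho> = 1"
  shows "mu \<rho> (\<lambda>i a b. of_real (s i) * idop a b) = (\<Prod>i\<in>UNIV. s i)"
proof -
  have t: "tensor (\<lambda>i a b. of_real (s i) * idop a b) = (\<lambda>f g. of_real (\<Prod>i\<in>UNIV. s i) * idop f g)"
    unfolding tensor_def by (simp add: fun_eq_iff prod.distrib prod_idop)
  have h: "(\<lambda>j. \<rho> h j * (of_real (\<Prod>i\<in>UNIV. s i) * idop j h)) = (\<lambda>j. if j = h then of_real (\<Prod>i\<in>UNIV. s i) * \<rho> h h else 0)" for h
    by (rule ext) (auto simp: idop_def)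
  have "trace (op_mult \<rho> (tensor (\<lambda>i a b. of_real (s i) * idop a b))) = of_real (\<Prod>i\<in>UNIV. s i) * trace \<rho>"
    unfolding t op_mult_def trace_def h by (simp add: sum_distrib_left)
  then show ?thesis unfolding mu_def using assms by (simp only: mult_1_right Re_complex_of_real)
qed

lemma prod_if_count:
  fixes x :: "'n::finite \<Rightarrow> bool"
  shows "(\<Prod>i\<in>UNIV. if x i then p else q) = p ^ card {i. x i} * q ^ (card (UNIV::'n set) - card {i. x i})"
proof -
  have "(\<Prod>i\<in>UNIV. if x i then p else q) = (\<Prod>i\<in>{i. x i}. p) * (\<Prod>i\<in>{i. \<not> x i}. q)"
    by (simp add: prod.If_cases Int_def Collect_neg_eq)
  also have "card {i. \<not> x i} = card (UNIV::'n set) - card {i. x i}"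
  proof -
    have "{i. \<not> x i} = UNIV - {i. x i}" by auto
    then show ?thesis using card_Diff_subset[of "{i. x i}" UNIV] by simp
  qed
  ultimately show ?thesis by simp
qed

lemma card_bool_funs:
  "card {x :: 'n::finite \<Rightarrow> bool. card {i. x i} = j} = card (UNIV :: 'n set) choose j"
proof -
  have inj: "inj_on Collect {x :: 'n \<Rightarrow> bool. card {i. x i} = j}" by (auto simp: inj_on_def)
  have im: "Collect ` {x :: 'n \<Rightarrow> bool. card {i. x i} = j} = {B. B \<subseteq> UNIV \<and> card B = j}"
  proof (rule set_eqI, rule iffI)
    fix B :: "'n set" assume "B \<in> {B. B \<subseteq> UNIV \<and> card B = j}"
    then have "B = Collect (\<lambda>i. i \<in> B)" "(\<lambda>i::'n. i \<in> B) \<in> {x :: 'n \<Rightarrow> bool. card {i. x i} = j}" by auto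
    then show "B \<in> Collect ` {x :: 'n \<Rightarrow> bool. card {i. x i} = j}" by blast
  qed auto
  have "card {x :: 'n \<Rightarrow> bool. card {i. x i} = j} = card {B. B \<subseteq> (UNIV :: 'n set) \<and> card B = j}"
    using card_image[OF inj] im by simp
  also have "\<dots> = card (UNIV :: 'n set) choose j" by (rule n_subsets) simp
  finally show ?thesis .
qed



lemma sum3:
  fixes f :: "nat \<Rightarrow> 'a::comm_monoid_add"
  shows "(\<Sum>k\<in>{k\<in>{0,1,2::nat}. P k}. f k) = (if P 0 then f 0 else 0) + (if P 1 then f 1 else 0) + (if P 2 then f 2 else 0)"
  by (subst sum.inter_filter) (simp_all add: add.assoc)

lemma cg3:
  fixes F :: "'n::finite \<Rightarrow> nat \<Rightarrow> 'd::finite qop" and G :: "'n \<Rightarrow> bool \<Rightarrow> 'd qop"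
    and w :: "('n \<Rightarrow> bool) \<Rightarrow> real" and \<pi> :: "nat \<Rightarrow> bool"
  assumes "\<And>i o2 a b. G i o2 a b = (if \<pi> 0 = o2 then F i 0 a b else 0) + (if \<pi> 1 = o2 then F i 1 a b else 0) + (if \<pi> 2 = o2 then F i 2 a b else 0)"
  shows "(\<Sum>y\<in>{y. \<forall>i. y i \<in> {0,1,2}}. w (\<pi> \<circ> y) * mu \<rho> (\<lambda>i. F i (y i))) = (\<Sum>x\<in>UNIV. w x * mu \<rho> (\<lambda>i. G i (x i)))"
proof -
  have "(\<Sum>y\<in>{y. \<forall>i. y i \<in> {0,1,2}}. w (\<pi> \<circ> y) * mu \<rho> (\<lambda>i. F i (y i)))
      = (\<Sum>z\<in>{z. \<forall>i. z i \<in> UNIV}. w z * mu \<rho> (\<lambda>i. G i (z i)))"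
    by (rule cg; (subst sum3)?; simp add: assms)
  then show ?thesis by simp
qed

definition thr :: "real \<Rightarrow> ('n::finite \<Rightarrow> bool) \<Rightarrow> real" where
  "thr t x = (if t \<le> real (card {i. x i}) / real (card (UNIV :: 'n set)) then 1 else 0)"

lemma prob_as_sum:
  "prob_frac_ge \<rho> P t = (\<Sum>x\<in>UNIV. thr t x * mu \<rho> (\<lambda>i. if x i then P i else op_minus idop (P i)))"
proof -
  have "prob_frac_ge \<rho> P t = (\<Sum>x\<in>UNIV. if t \<le> real (card {i. x i}) / real (card (UNIV :: 'a set)) then outcome_prob \<rho> P x else 0)"
    unfolding prob_frac_ge_def by (simp add: sum.If_cases Int_def)
  also have "\<dots> = (\<Sum>x\<in>UNIV. thr t x * mu \<rho> (\<lambda>i. if x i then P i else op_minus idop (P i)))"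
    by (rule sum.cong) (simp_all add: thr_def outcome_prob_def mu_def)
  finally show ?thesis .
qed

lemma thr_mono:
  fixes x x' :: "'n::finite \<Rightarrow> bool"
  assumes "card {i. x i} \<le> card {i. x' i}"
  shows "thr t x \<le> thr t x'"
proof -
  have "real (card {i. x i}) / real (card (UNIV :: 'n set)) \<le> real (card {i. x' i}) / real (card (UNIV :: 'n set))"
    using assms by (intro divide_right_mono) auto
  then show ?thesis unfolding thr_def by auto
qed

lemma thr_split:
  fixes y :: "'n::finite \<Rightarrow> nat"
  shows "thr (e + d) ((\<lambda>k. k \<le> 1) \<circ> y) \<le> thr e ((\<lambda>k. k = 0) \<circ> y) + thr d ((\<lambda>k. k = 1) \<circ> y)"
proof -
  have "{i. y i \<le> 1} = {i. y i = 0} \<union> {i. y i = 1}" by auto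
  then have c: "card {i. y i \<le> 1} = card {i. y i = 0} + card {i. y i = 1}"
    by (simp add: card_Un_disjoint disjoint_iff)
  let ?n = "real (card (UNIV :: 'n set))"
  have "real (card {i. y i \<le> 1}) / ?n = real (card {i. y i = 0}) / ?n + real (card {i. y i = 1}) / ?n"
    unfolding c by (simp add: add_divide_distrib)
  then show ?thesis unfolding thr_def by (auto simp: o_def)
qed

lemma sum_weights_mono:
  assumes "\<And>y. y \<in> Y \<Longrightarrow> w1 y \<le> w2 y" "\<And>y. y \<in> Y \<Longrightarrow> 0 \<le> (m y :: real)"
  shows "(\<Sum>y\<in>Y. w1 y * m y) \<le> (\<Sum>y\<in>Y. w2 y * m y)"
  by (rule sum_mono) (simp add: assms mult_right_mono)

lemma binom_part:
  fixes \<rho> :: "('n::finite \<Rightarrow> 'd::finite) qop"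
  assumes tr: "trace \<rho> = 1" and n_def: "n = card (UNIV :: 'n set)"
  shows "(\<Sum>x\<in>UNIV. thr t x * mu \<rho> (\<lambda>i. if x i then (\<lambda>a b. of_real \<delta> * idop a b) else (\<lambda>a b. of_real (1 - \<delta>) * idop a b)))
    = (\<Sum>i\<in>{i::nat. real n * t \<le> real i \<and> i \<le> n}. real (n choose i) * \<delta> ^ i * (1 - \<delta>) ^ (n - i))"
proof -
  have npos: "n > 0" unfolding n_def by (simp add: card_gt_0_iff)
  define h where "h j = (if t \<le> real j / real n then 1 else 0) * (\<delta> ^ j * (1 - \<delta>) ^ (n - j))" for j
  have "(\<lambda>i. if x i then (\<lambda>a b. of_real \<delta> * idop a b) else (\<lambda>a b. of_real (1 - \<delta>) * idop a b))
      = (\<lambda>i a b. of_real (if x i then \<delta> else 1 - \<delta>) * idop a b)" for x :: "'n \<Rightarrow> bool"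
    by (auto simp: fun_eq_iff)
  note eqx = this
  have m: "mu \<rho> (\<lambda>i. if x i then (\<lambda>a b. of_real \<delta> * idop a b) else (\<lambda>a b. of_real (1 - \<delta>) * idop a b))
      = \<delta> ^ card {i. x i} * (1 - \<delta>) ^ (n - card {i. x i})" for x :: "'n \<Rightarrow> bool"
    by (subst eqx) (simp only: mu_idop_scale[OF tr] prod_if_count n_def)
  have "(\<Sum>x\<in>UNIV. thr t x * mu \<rho> (\<lambda>i. if x i then (\<lambda>a b. of_real \<delta> * idop a b) else (\<lambda>a b. of_real (1 - \<delta>) * idop a b)))
      = (\<Sum>x\<in>(UNIV::('n \<Rightarrow> bool) set). h (card {i. x i}))"
    unfolding m h_def thr_def n_def by simp
  also have "\<dots> = (\<Sum>j\<in>{..n}. \<Sum>x\<in>{x\<in>(UNIV::('n \<Rightarrow> bool) set). card {i. x i} = j}. h (card {i. x i}))"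
  proof (rule sum.group[symmetric])
    show "(\<lambda>x::'n \<Rightarrow> bool. card {i. x i}) ` UNIV \<subseteq> {..n}"
      unfolding n_def by (auto intro: card_mono)
  qed auto
  also have "\<dots> = (\<Sum>j\<in>{..n}. real (n choose j) * h j)"
  proof (rule sum.cong[OF refl])
    fix j
    have "(\<Sum>x\<in>{x\<in>(UNIV::('n \<Rightarrow> bool) set). card {i. x i} = j}. h (card {i. x i})) = (\<Sum>x\<in>{x :: 'n \<Rightarrow> bool. card {i. x i} = j}. h j)"
      by (rule sum.cong) auto
    also have "\<dots> = real (n choose j) * h j" using card_bool_funs[where 'n='n, of j] unfolding n_def by simp
    finally show "(\<Sum>x\<in>{x\<in>(UNIV::('n \<Rightarrow> bool) set). card {i. x i} = j}. h (card {i. x i})) = real (n choose j) * h j" .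
  qed
  also have "\<dots> = (\<Sum>j\<in>{..n}. if real n * t \<le> real j then real (n choose j) * \<delta> ^ j * (1 - \<delta>) ^ (n - j) else 0)"
  proof (rule sum.cong[OF refl])
    fix j
    have "(t \<le> real j / real n) = (real n * t \<le> real j)" using npos by (simp add: le_divide_eq mult.commute)
    then show "real (n choose j) * h j = (if real n * t \<le> real j then real (n choose j) * \<delta> ^ j * (1 - \<delta>) ^ (n - j) else 0)"
      unfolding h_def by simp
  qed
  also have "\<dots> = (\<Sum>j\<in>{j\<in>{..n}. real n * t \<le> real j}. real (n choose j) * \<delta> ^ j * (1 - \<delta>) ^ (n - j))"
    by (subst sum.inter_filter) simp_all
  also have "{j\<in>{..n}. real n * t \<le> real j} = {i::nat. real n * t \<le> real i \<and> i \<le> n}" by auto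
  finally show ?thesis .
qed



theorem lemma10:
  fixes \<rho> :: "('n::finite \<Rightarrow> 'd::finite) qop"
    and P P' Pt :: "'n \<Rightarrow> 'd qop"
    and e \<delta> c :: real
    and n :: nat
  assumes n_def: "n = card (UNIV :: 'n set)"
    and state: "is_state \<rho>"
    and P_povm: "\<And>i. op_le zeroop (P i) \<and> op_le (P i) idop"
    and P'_povm: "\<And>i. op_le zeroop (P' i) \<and> op_le (P' i) idop"
    and Pt_bnd: "\<And>i. op_le zeroop (Pt i) \<and> op_le (Pt i) idop"
    and P_le: "\<And>i. op_le (P i) (Pt i)"
    and P'_le: "\<And>i. op_le (P' i) (Pt i)"
    and close: "\<And>i. op_norm (op_minus (Pt i) (P i)) \<le> \<delta>"
    and delta_le1: "\<delta> \<le> 1"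
  shows "prob_frac_ge \<rho> P' (e + \<delta> + c)
         \<le> prob_frac_ge \<rho> P e
           + (\<Sum>i\<in>{i::nat. real n * (\<delta> + c) \<le> real i \<and> i \<le> n}.
                real (n choose i) * \<delta> ^ i * (1 - \<delta>) ^ (n - i))"
proof -
  have psd\<rho>: "psd \<rho>" and tr: "trace \<rho> = 1" using state unfolding is_state_def by auto
  have mz: "op_minus A zeroop = A" for A :: "'d qop" by (simp add: op_minus_def zeroop_def)
  define Q where "Q i = op_minus (Pt i) (P i)" for i
  have psdP: "psd (P i)" for i using P_povm[of i] unfolding op_le_def mz by simp
  have psdP': "psd (P' i)" for i using P'_povm[of i] unfolding op_le_def mz by simp
  have psdIPt: "psd (op_minus idop (Pt i))" for i using Pt_bnd[of i] unfolding op_le_def by simp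
  have psdD: "psd (op_minus (Pt i) (P' i))" for i using P'_le[of i] unfolding op_le_def by simp
  have psdQ: "psd (Q i)" for i using P_le[of i] unfolding op_le_def Q_def by simp
  have psdR: "psd (\<lambda>a b. of_real \<delta> * idop a b - Q i a b)" for i
    using psd_from_norm[OF psdQ close[of i, folded Q_def]] .
  have psdS: "psd (\<lambda>a b. of_real (1 - \<delta>) * idop a b :: complex)" using delta_le1 by (intro psd_idop_scale) simp
  define F1 where "F1 i k = (if k = (0::nat) then P' i else if k = 1 then op_minus (Pt i) (P' i) else op_minus idop (Pt i))" for i k
  define F2 where "F2 i k = (if k = (0::nat) then P i else if k = 1 then Q i else op_minus idop (Pt i))" for i k
  define F3 where "F3 i k = (if k = (0::nat) then (\<lambda>a b. of_real \<delta> * idop a b - Q i a b) else if k = 1 then Q i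
                             else (\<lambda>a b. of_real (1 - \<delta>) * idop a b))" for i k
  have pos1: "0 \<le> mu \<rho> (\<lambda>i. F1 i (y i))" for y
    by (rule mu_pos[OF psd\<rho>]) (simp add: F1_def psdP' psdD psdIPt)
  have pos2: "0 \<le> mu \<rho> (\<lambda>i. F2 i (y i))" for y
    by (rule mu_pos[OF psd\<rho>]) (simp add: F2_def psdP psdQ psdIPt)
  have pos3: "0 \<le> mu \<rho> (\<lambda>i. F3 i (y i))" for y
    by (rule mu_pos[OF psd\<rho>]) (simp add: F3_def psdR psdQ psdS del: of_real_diff)
  define GP' where "GP' i b = (if b then P' i else op_minus idop (P' i))" for i b
  define GT where "GT i b = (if b then Pt i else op_minus idop (Pt i))" for i b
  define GP where "GP i b = (if b then P i else op_minus idop (P i))" for i b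
  define GQ where "GQ i b = (if b then Q i else op_minus idop (Q i))" for i b
  define GD :: "'n \<Rightarrow> bool \<Rightarrow> 'd qop" where "GD i b = (if b then (\<lambda>a b. of_real \<delta> * idop a b) else (\<lambda>a b. of_real (1 - \<delta>) * idop a b))" for i b
  let ?Y = "{y :: 'n \<Rightarrow> nat. \<forall>i. y i \<in> {0,1,2}}"
  define p0 where "p0 = (\<lambda>k::nat. k = 0)"
  define p1 where "p1 = (\<lambda>k::nat. k = 1)"
  define p01 where "p01 = (\<lambda>k::nat. k \<le> 1)"
  let ?T = "e + \<delta> + c"

  have "prob_frac_ge \<rho> P' ?T = (\<Sum>x\<in>UNIV. thr ?T x * mu \<rho> (\<lambda>i. GP' i (x i)))"
    unfolding prob_as_sum GP'_def ..
  also have "\<dots> = (\<Sum>y\<in>?Y. thr ?T (p0 \<circ> y) * mu \<rho> (\<lambda>i. F1 i (y i)))"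
    by (rule cg3[symmetric]) (auto simp: GP'_def F1_def p0_def op_minus_def)
  also have "\<dots> \<le> (\<Sum>y\<in>?Y. thr ?T (p01 \<circ> y) * mu \<rho> (\<lambda>i. F1 i (y i)))"
  proof (rule sum_weights_mono)
    fix y :: "'n \<Rightarrow> nat"
    show "thr ?T (p0 \<circ> y) \<le> thr ?T (p01 \<circ> y)"
      by (rule thr_mono) (auto simp: p0_def p01_def o_def intro: card_mono)
    show "0 \<le> mu \<rho> (\<lambda>i. F1 i (y i))" by (rule pos1)
  qed
  also have "\<dots> = (\<Sum>x\<in>UNIV. thr ?T x * mu \<rho> (\<lambda>i. GT i (x i)))"
    by (rule cg3) (auto simp: GT_def F1_def p01_def op_minus_def)
  also have "\<dots> = (\<Sum>y\<in>?Y. thr ?T (p01 \<circ> y) * mu \<rho> (\<lambda>i. F2 i (y i)))"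
    by (rule cg3[symmetric]) (auto simp: GT_def F2_def Q_def p01_def op_minus_def)
  also have "\<dots> \<le> (\<Sum>y\<in>?Y. (thr e (p0 \<circ> y) + thr (\<delta> + c) (p1 \<circ> y)) * mu \<rho> (\<lambda>i. F2 i (y i)))"
  proof (rule sum_weights_mono)
    fix y :: "'n \<Rightarrow> nat"
    show "thr ?T (p01 \<circ> y) \<le> thr e (p0 \<circ> y) + thr (\<delta> + c) (p1 \<circ> y)"
      using thr_split[of e "\<delta> + c" y] unfolding p0_def p1_def p01_def by (simp add: add.assoc)
    show "0 \<le> mu \<rho> (\<lambda>i. F2 i (y i))" by (rule pos2)
  qed
  also have "\<dots> = (\<Sum>y\<in>?Y. thr e (p0 \<circ> y) * mu \<rho> (\<lambda>i. F2 i (y i)))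
                + (\<Sum>y\<in>?Y. thr (\<delta> + c) (p1 \<circ> y) * mu \<rho> (\<lambda>i. F2 i (y i)))"
    by (simp add: distrib_right sum.distrib)
  also have "(\<Sum>y\<in>?Y. thr e (p0 \<circ> y) * mu \<rho> (\<lambda>i. F2 i (y i))) = (\<Sum>x\<in>UNIV. thr e x * mu \<rho> (\<lambda>i. GP i (x i)))"
    by (rule cg3) (auto simp: GP_def F2_def Q_def p0_def op_minus_def)
  also have "\<dots> = prob_frac_ge \<rho> P e"
    unfolding prob_as_sum GP_def ..
  also have "(\<Sum>y\<in>?Y. thr (\<delta> + c) (p1 \<circ> y) * mu \<rho> (\<lambda>i. F2 i (y i))) = (\<Sum>x\<in>UNIV. thr (\<delta> + c) x * mu \<rho> (\<lambda>i. GQ i (x i)))"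
    by (rule cg3) (auto simp: GQ_def F2_def Q_def p1_def op_minus_def)
  also have "\<dots> = (\<Sum>y\<in>?Y. thr (\<delta> + c) (p1 \<circ> y) * mu \<rho> (\<lambda>i. F3 i (y i)))"
    by (rule cg3[symmetric]) (auto simp: GQ_def F3_def Q_def p1_def op_minus_def idop_def)
  also have "\<dots> \<le> (\<Sum>y\<in>?Y. thr (\<delta> + c) (p01 \<circ> y) * mu \<rho> (\<lambda>i. F3 i (y i)))"
  proof (rule sum_weights_mono)
    fix y :: "'n \<Rightarrow> nat"
    show "thr (\<delta> + c) (p1 \<circ> y) \<le> thr (\<delta> + c) (p01 \<circ> y)"
      by (rule thr_mono) (auto simp: p1_def p01_def o_def intro: card_mono)
    show "0 \<le> mu \<rho> (\<lambda>i. F3 i (y i))" by (rule pos3)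
  qed
  also have "\<dots> = (\<Sum>x\<in>UNIV. thr (\<delta> + c) x * mu \<rho> (\<lambda>i. GD i (x i)))"
    by (rule cg3) (auto simp: GD_def F3_def Q_def p01_def op_minus_def)
  also have "\<dots> = (\<Sum>i\<in>{i::nat. real n * (\<delta> + c) \<le> real i \<and> i \<le> n}.
                real (n choose i) * \<delta> ^ i * (1 - \<delta>) ^ (n - i))"
    unfolding GD_def by (rule binom_part[OF tr n_def])
  finally show ?thesis by simp
qed

end
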